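(* In the blowup/base-change setting below, suppose there are no special fibers at any intersection point $B^{p,p+1}$, $0\le p<P$, of the configuration $\mathcal Y$, and let $k$ be any positive integer. Then for every $p\in\{0,\dots,P\}$ and every point of $B^p$ with homogeneous coordinates $[e_{p-1}:e_{p+1}]$ (where $e_{-1}:=t$ and $e_{P+1}:=s$), the K3 vanishing orders of $(f,g,\Delta')$ of $\mathcal Y$ at that point coincide with the K3 vanishing orders of $(\bar f,\bar g,\bar\Delta')$ of $\bar{\mathcal Y}$ at the point of $\bar B^{kp}$ with coordinates $[\bar e_{kp-1}:\bar e_{kp+1}]=[e_{p-1}:e_{p+1}]$ (where $\bar e_{-1}:=t$, $\bar e_{\bar P+1}:=s$). In particular the Kodaira types of all fibers over interior points of the base components are unchanged by the base change.
   Context: Blowup setting. Let $f=f(s,t;u)$, $g=g(s,t;u)$ be complex polynomials, homogeneous in $(s,t)$ of degrees $8$ and $12$, defining a family of Weierstrass models $y^2=x^3+fxz^4+gz^6$ over $\mathbb P^1_{[s:t]}$ with parameter $u$; $\Delta:=4f^3+27g^2$. Let $a,b$ be the vanishing orders in $s$ at $s=0$ of $f,g$ for generic $u\ne0$ (not both $a\ge4$, $b\ge6$), and write $f=s^a\sum_i\mathcal F_i\,s^it^{8-a-i}$, $g=s^b\sum_j\mathcal G_j\,s^jt^{12-b-j}$. Assume the 3-fold vanishing orders of $(f,g,\Delta)$ at $(u,s)=(0,0)$ (largest $N$ with the function in $(u,s)^N$, $t=1$) are $(4+\alpha,6+\beta,12+\gamma)$ with $\alpha=0$ or $\beta=0$,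 and that this persists under all base changes $u\mapsto u^\ell$ (Classes 1–4). Blowup chain: $e_0:=u$; the $p$-th blowup substitutes $e_{p-1}\mapsto e_{p-1}e_p$, $s\mapsto se_p$ and divides $f,g,\Delta$ by $e_p^4,e_p^6,e_p^{12}$; $\mu_{q,i}$, $\nu_{q,j}$ are the vanishing orders in $e_q$ of the coefficients $\mathcal F_i(e_0,\dots)$, $\mathcal G_j(e_0,\dots)$; $P$ is the first number of blowups for which some $i<4-a$ with $\mathcal F_i\neq0$ has $\mu_{P,i}<4-a-i$ or some $j<6-b$ with $\mathcal G_j\ne0$ has $\nu_{P,j}<6-b-j$. Standing assumption: there is such an $i$ with $\mu_{P,i}=0$ or such a $j$ with $\nu_{P,j}=0$ (achievable by a preliminary base change). Base components $B^p=\{e_p=0\}$ form a chain, $B^{p,p+1}=\{e_p=e_{p+1}=0\}$; homogeneous coordinates on $B^p$ are $[e_{p-1}:e_{p+1}]$ with the conventions above, other coordinates nonvanishing and set to $1$. $n_p$ is the largest power of $e_p$ dividing $\Delta$ and $\Delta=\prod_qe_q^{n_q}\Delta'$. There is a special fiber at $B^{p,p+1}$ iff every monomial of $\Delta'$ is divisible by $e_p$ or $e_{p+1}$. The K3 vanishing orders at a point of $B^p$ are the vanishing orders there of $f|_{e_p=0}$, $g|_{e_p=0}$, $\Delta'|_{e_p=0}$ ($\infty$ if identically zero). Base change: for a positive integer $k$, the barred configuration $\bar{\mathcal Y}$ is obtained by substituting $u\mapsto u^k$ in $f,g$ and then performing the blowup chain, which now consists of $\bar P=kP$ blowups with coordinates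 $\bar e_0,\dots,\bar e_{\bar P}$; $\bar f,\bar g$, $\bar B^{\bar p}$, $\bar\Delta'$ are defined analogously. *)

theory Defs
  imports Complex_Main "HOL-Computational_Algebra.Polynomial" "HOL-Library.Extended_Nat"
begin

(* Variables of the blown-up models: s, t and the exceptional coordinates e_0 (= u), e_1, ... *)
datatype var = S | T | E nat

(* A polynomial in the variables s, t, e_0, e_1, ... is represented by its coefficient
   function on exponent vectors (monomials); only finitely many coefficients are nonzero
   for all polynomials arising below. *)
type_synonym mono = "var \<Rightarrow> nat"
type_synonym cpoly = "mono \<Rightarrow> complex"

(* A polynomial f(s,t;u), homogeneous of degree d in (s,t), is given by its coefficients
   F i :: complex poly (polynomials in u):  f = sum_i F_i(u) s^i t^(d-i).  *)

definition bf_mult :: "(nat \<Rightarrow> complex poly) \<Rightarrow> (nat \<Rightarrow> complex poly) \<Rightarrow> nat \<Rightarrow> complex poly" where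
  "bf_mult A B k = (\<Sum>i\<le>k. A i * B (k - i))"

definition disc :: "(nat \<Rightarrow> complex poly) \<Rightarrow> (nat \<Rightarrow> complex poly) \<Rightarrow> nat \<Rightarrow> complex poly" where
  "disc F G = (\<lambda>k. 4 * bf_mult F (bf_mult F F) k + 27 * bf_mult G G k)"

definition bc :: "nat \<Rightarrow> (nat \<Rightarrow> complex poly) \<Rightarrow> nat \<Rightarrow> complex poly" where
  "bc k F = (\<lambda>i. pcompose (F i) (monom 1 k))"

definition s_ord :: "(nat \<Rightarrow> complex poly) \<Rightarrow> enat" where
  "s_ord F = (if \<forall>i. F i = 0 then \<infinity> else enat (LEAST i. F i \<noteq> 0))"

(* 3-fold vanishing order at (u,s) = (0,0), t = 1: largest N with f in (u,s)^N *)
definition in_us_pow :: "(nat \<Rightarrow> complex poly) \<Rightarrow> nat \<Rightarrow> bool" where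
  "in_us_pow F N = (\<forall>i l. coeff (F i) l \<noteq> 0 \<longrightarrow> N \<le> i + l)"

definition ord3 :: "(nat \<Rightarrow> complex poly) \<Rightarrow> enat" where
  "ord3 F = (if \<forall>i. F i = 0 then \<infinity> else enat (GREATEST N. in_us_pow F N))"

definition threefold_cond :: "(nat \<Rightarrow> complex poly) \<Rightarrow> (nat \<Rightarrow> complex poly) \<Rightarrow> bool" where
  "threefold_cond F G =
     (4 \<le> ord3 F \<and> 6 \<le> ord3 G \<and> 12 \<le> ord3 (disc F G) \<and> (ord3 F = 4 \<or> ord3 G = 6))"

definition lift :: "(nat \<Rightarrow> complex poly) \<Rightarrow> nat \<Rightarrow> cpoly" where
  "lift F d = (\<lambda>m. if m S + m T = d \<and> (\<forall>q. q \<noteq> 0 \<longrightarrow> m (E q) = 0)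
                   then coeff (F (m S)) (m (E 0)) else 0)"

(* p-th blowup (p \<ge> 1): substitute e_(p-1) |-> e_(p-1) e_p, s |-> s e_p and divide by e_p^w.
   A monomial m of the old polynomial (which does not involve e_p) goes to
   m(e_p := m(e_(p-1)) + m(s) - w); this is exact whenever the division is exact,
   which is the case for all blowups of the chain (p \<le> P). *)
definition bl_step :: "nat \<Rightarrow> nat \<Rightarrow> cpoly \<Rightarrow> cpoly" where
  "bl_step w p c = (\<lambda>m. if m (E p) + w = m (E (p - 1)) + m S then c (m(E p := 0)) else 0)"

primrec blowups :: "nat \<Rightarrow> cpoly \<Rightarrow> nat \<Rightarrow> cpoly" where
  "blowups w c 0 = c"
| "blowups w c (Suc q) = bl_step w (Suc q) (blowups w c q)"

definition fB :: "(nat \<Rightarrow> complex poly) \<Rightarrow> nat \<Rightarrow> cpoly" where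
  "fB F q = blowups 4 (lift F 8) q"
definition gB :: "(nat \<Rightarrow> complex poly) \<Rightarrow> nat \<Rightarrow> cpoly" where
  "gB G q = blowups 6 (lift G 12) q"
definition DB :: "(nat \<Rightarrow> complex poly) \<Rightarrow> (nat \<Rightarrow> complex poly) \<Rightarrow> nat \<Rightarrow> cpoly" where
  "DB F G q = blowups 12 (lift (disc F G) 24) q"

(* vanishing order in e_q of the coefficient of s^al (mu_{q,i}, nu_{q,j} with al = a + i) *)
definition coeff_eord :: "cpoly \<Rightarrow> nat \<Rightarrow> nat \<Rightarrow> enat" where
  "coeff_eord c q al = (if \<exists>m. c m \<noteq> 0 \<and> m S = al
     then enat (LEAST n. \<exists>m. c m \<noteq> 0 \<and> m S = al \<and> m (E q) = n) else \<infinity>)"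

(* P: first number of blowups with some i < 4-a, F_i \<noteq> 0, mu_{P,i} < 4-a-i, or the analogue
   for g (written with the absolute s-exponent al = a + i) *)
definition chainP :: "(nat \<Rightarrow> complex poly) \<Rightarrow> (nat \<Rightarrow> complex poly) \<Rightarrow> nat" where
  "chainP F G = (LEAST q.
      (\<exists>al<4. F al \<noteq> 0 \<and> coeff_eord (fB F q) q al < enat (4 - al)) \<or>
      (\<exists>be<6. G be \<noteq> 0 \<and> coeff_eord (gB G q) q be < enat (6 - be)))"

definition standing :: "(nat \<Rightarrow> complex poly) \<Rightarrow> (nat \<Rightarrow> complex poly) \<Rightarrow> bool" where
  "standing F G = (let P = chainP F G in
      (\<exists>al<4. F al \<noteq> 0 \<and> coeff_eord (fB F P) P al = 0) \<or>
      (\<exists>be<6. G be \<noteq> 0 \<and> coeff_eord (gB G P) P be = 0))"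

definition eord :: "cpoly \<Rightarrow> nat \<Rightarrow> nat" where
  "eord c q = (LEAST n. \<exists>m. c m \<noteq> 0 \<and> m (E q) = n)"

(* Delta' = Delta / prod_q e_q^(n_q), Delta after the P blowups *)
definition Dprime :: "(nat \<Rightarrow> complex poly) \<Rightarrow> (nat \<Rightarrow> complex poly) \<Rightarrow> cpoly" where
  "Dprime F G = (let c = DB F G (chainP F G) in
      (\<lambda>m. c (\<lambda>v. case v of E q \<Rightarrow> m v + eord c q | _ \<Rightarrow> m v)))"

definition special_fiber :: "(nat \<Rightarrow> complex poly) \<Rightarrow> (nat \<Rightarrow> complex poly) \<Rightarrow> nat \<Rightarrow> bool" where
  "special_fiber F G p = (\<forall>m. Dprime F G m \<noteq> 0 \<longrightarrow> m (E p) \<noteq> 0 \<or> m (E (Suc p)) \<noteq> 0)"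

(* homogeneous coordinates [e_(p-1) : e_(p+1)] on B^p, with e_(-1) = t, e_(P+1) = s *)
definition prevv :: "nat \<Rightarrow> var" where
  "prevv p = (if p = 0 then T else E (p - 1))"
definition nextv :: "nat \<Rightarrow> nat \<Rightarrow> var" where
  "nextv P p = (if p = P then S else E (Suc p))"

(* c restricted to e_p = 0, all coordinates except v set to 1: a polynomial in v *)
definition restr :: "cpoly \<Rightarrow> nat \<Rightarrow> var \<Rightarrow> complex poly" where
  "restr c p v = (\<Sum>m \<in> {m. c m \<noteq> 0 \<and> m (E p) = 0}. monom (c m) (m v))"

(* vanishing order of c|_{e_p = 0} at the point [x : y] = [e_(p-1) : e_(p+1)] of B^p,
   computed in the affine chart e_(p-1) = 1 (if x \<noteq> 0) or e_(p+1) = 1 (if x = 0);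
   infinity if the restriction is identically zero *)
definition k3ord :: "cpoly \<Rightarrow> nat \<Rightarrow> nat \<Rightarrow> complex \<Rightarrow> complex \<Rightarrow> enat" where
  "k3ord c P p x y =
     (let q = (if x \<noteq> 0 then restr c p (nextv P p) else restr c p (prevv p));
          z = (if x \<noteq> 0 then y / x else 0)
      in if q = 0 then \<infinity> else enat (order z q))"

definition K3_orders :: "(nat \<Rightarrow> complex poly) \<Rightarrow> (nat \<Rightarrow> complex poly) \<Rightarrow> nat
                          \<Rightarrow> complex \<Rightarrow> complex \<Rightarrow> enat \<times> enat \<times> enat" where
  "K3_orders F G p x y = (let P = chainP F G in
      (k3ord (fB F P) P p x y, k3ord (gB G P) P p x y, k3ord (Dprime F G) P p x y))"

end

theory Submission
  imports Defs
begin

lemma coeff_pcomp_monom: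
  assumes "0 < k"
  shows "coeff (pcompose p (monom (1::'a::comm_ring_1) k)) n = (if k dvd n then coeff p (n div k) else 0)"
  using assms
proof (induction p arbitrary: n)
  case 0
  then show ?case by simp
next
  case (pCons a p)
  have "coeff (pcompose (pCons a p) (monom 1 k)) n =
        (if n = 0 then a else 0) + (if k \<le> n then coeff (pcompose p (monom 1 k)) (n - k) else 0)"
    by (simp add: pcompose_pCons coeff_monom_mult coeff_pCons split: nat.split)
  also have "\<dots> = (if k dvd n then coeff (pCons a p) (n div k) else 0)"
  proof (cases "n = 0")
    case True then show ?thesis using pCons by simp
  next
    case False
    show ?thesis
    proof (cases "k \<le> n")
      case True
      have d: "k dvd n \<longleftrightarrow> k dvd (n - k)" using True by (simp add: dvd_minus_self)
      have "k dvd n \<Longrightarrow> n div k = Suc ((n - k) div k)"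
        using True pCons.prems by (metis Suc_eq_plus1 add.commute div_add_self1 le_add_diff_inverse less_not_refl2 )
      then show ?thesis using False True pCons d by (auto simp: coeff_pCons split: nat.split)
    next
      case f2: False
      then have "\<not> k dvd n" using False by (meson dvd_imp_le not_le_imp_less not_gr0 less_imp_le)
      then show ?thesis using False f2 by simp
    qed
  qed
  finally show ?case .
qed

definition chart :: "nat \<Rightarrow> nat \<Rightarrow> nat \<Rightarrow> mono \<Rightarrow> bool" where
  "chart W D Q m \<longleftrightarrow> m S + m T = D \<and> (\<forall>j>Q. m (E j) = 0) \<and>
     (\<forall>j\<le>Q. int (m (E j)) = int (m (E 0)) - int j * (int W - int (m S)))"

lemma blow_chart:
  "blowups W (lift H D) Q m = (if chart W D Q m then coeff (H (m S)) (m (E 0)) else 0)"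
proof (induction Q arbitrary: m)
  case 0
  have "chart W D 0 m \<longleftrightarrow> m S + m T = D \<and> (\<forall>q. q \<noteq> 0 \<longrightarrow> m (E q) = 0)"
  proof
    assume c: "chart W D 0 m"
    have "m S + m T = D" using c unfolding chart_def by blast
    moreover have "\<forall>q. q \<noteq> 0 \<longrightarrow> m (E q) = 0"
    proof (intro allI impI)
      fix q :: nat assume "q \<noteq> 0" then have "q > 0" by simp
      then show "m (E q) = 0" using c unfolding chart_def by blast
    qed
    ultimately show "m S + m T = D \<and> (\<forall>q. q \<noteq> 0 \<longrightarrow> m (E q) = 0)" by blast
  next
    assume c: "m S + m T = D \<and> (\<forall>q. q \<noteq> 0 \<longrightarrow> m (E q) = 0)"
    have a: "\<forall>j>0. m (E j) = 0" using c by blast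
    have b: "\<forall>j\<le>0. int (m (E j)) = int (m (E 0)) - int j * (int W - int (m S))" by simp
    show "chart W D 0 m" unfolding chart_def using c a b by blast
  qed
  then show ?case by (simp add: lift_def)
next
  case (Suc Q)
  let ?m' = "m(E (Suc Q) := 0)"
  have m'1: "?m' S = m S" "?m' T = m T" "?m' (E 0) = m (E 0)" by auto
  have m'2: "\<And>j. j \<noteq> Suc Q \<Longrightarrow> ?m' (E j) = m (E j)" by auto
  have eq: "(m (E (Suc Q)) + W = m (E Q) + m S \<and> chart W D Q ?m') \<longleftrightarrow> chart W D (Suc Q) m"
  proof
    assume h: "m (E (Suc Q)) + W = m (E Q) + m S \<and> chart W D Q ?m'"
    then have ch: "chart W D Q ?m'" by blast
    have chu: "?m' S + ?m' T = D \<and> (\<forall>j>Q. ?m' (E j) = 0) \<and>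
     (\<forall>j\<le>Q. int (?m' (E j)) = int (?m' (E 0)) - int j * (int W - int (?m' S)))"
      using ch unfolding chart_def .
    note chu1 = chu[THEN conjunct1] and chu2 = chu[THEN conjunct2, THEN conjunct1]
      and chu3 = chu[THEN conjunct2, THEN conjunct2]
    have c1: "m S + m T = D" using chu1 m'1 by (simp only:)
    have c2: "\<forall>j>Suc Q. m (E j) = 0"
    proof (intro allI impI)
      fix j assume "Suc Q < j"
      then have j: "j > Q" "j \<noteq> Suc Q" by auto
      have "?m' (E j) = 0" by (rule chu2[rule_format, OF j(1)])
      then show "m (E j) = 0" using m'2[OF j(2)] by (simp only:)
    qed
    have c3: "\<forall>j\<le>Q. int (m (E j)) = int (m (E 0)) - int j * (int W - int (m S))"
    proof (intro allI impI)
      fix j assume j: "j \<le> Q"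
      then have j2: "j \<noteq> Suc Q" by auto
      have "int (?m' (E j)) = int (?m' (E 0)) - int j * (int W - int (?m' S))" using chu3[rule_format, OF j] .
      then show "int (m (E j)) = int (m (E 0)) - int j * (int W - int (m S))"
        using m'1 m'2[OF j2] by (simp only:)
    qed
    have q: "int (m (E Q)) = int (m (E 0)) - int Q * (int W - int (m S))" using c3[rule_format, OF le_refl] .
    have q2: "int (m (E (Suc Q))) = int (m (E 0)) - int (Suc Q) * (int W - int (m S))"
    proof -
      have "int (m (E (Suc Q))) + int W = int (m (E Q)) + int (m S)" using h by linarith
      then show ?thesis using q by (simp add: algebra_simps)
    qed
    have c4: "\<forall>j\<le>Suc Q. int (m (E j)) = int (m (E 0)) - int j * (int W - int (m S))"
    proof (intro allI impI)
      fix j assume j: "j \<le> Suc Q"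
      show "int (m (E j)) = int (m (E 0)) - int j * (int W - int (m S))"
      proof (cases "j = Suc Q")
        case True then show ?thesis using q2 by (simp only:)
      next
        case False with j have "j \<le> Q" by simp
        then show ?thesis by (rule c3[rule_format])
      qed
    qed
    show "chart W D (Suc Q) m" unfolding chart_def by (intro conjI c1 c2 c4)
  next
    assume h: "chart W D (Suc Q) m"
    have c1: "m S + m T = D" using h unfolding chart_def by blast
    have c2: "\<forall>j>Suc Q. m (E j) = 0" using h unfolding chart_def by blast
    have c3: "\<forall>j\<le>Suc Q. int (m (E j)) = int (m (E 0)) - int j * (int W - int (m S))"
      using h unfolding chart_def by blast
    have q: "int (m (E Q)) = int (m (E 0)) - int Q * (int W - int (m S))"
      "int (m (E (Suc Q))) = int (m (E 0)) - int (Suc Q) * (int W - int (m S))"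
      using c3[rule_format, of Q] c3[rule_format, of "Suc Q"] by auto
    have "int (m (E (Suc Q))) + int W = int (m (E Q)) + int (m S)" using q by (simp add: algebra_simps)
    then have e: "m (E (Suc Q)) + W = m (E Q) + m S" by linarith
    have d1: "?m' S + ?m' T = D" using c1 m'1 by simp
    have d2: "\<forall>j>Q. ?m' (E j) = 0"
    proof (intro allI impI)
      fix j assume j: "Q < j"
      show "?m' (E j) = 0"
      proof (cases "j = Suc Q")
        case True then show ?thesis by simp
      next
        case False then show ?thesis using j c2 m'2 by simp
      qed
    qed
    have d3: "\<forall>j\<le>Q. int (?m' (E j)) = int (?m' (E 0)) - int j * (int W - int (?m' S))"
    proof (intro allI impI)
      fix j assume j: "j \<le> Q"
      then have "j \<noteq> Suc Q" by auto
      then show "int (?m' (E j)) = int (?m' (E 0)) - int j * (int W - int (?m' S))"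
        using c3[rule_format, of j] j m'1 m'2 by simp
    qed
    have "chart W D Q ?m'" unfolding chart_def by (intro conjI d1 d2 d3)
    with e show "m (E (Suc Q)) + W = m (E Q) + m S \<and> chart W D Q ?m'" by blast
  qed
  have st: "blowups W (lift H D) (Suc Q) m =
        (if m (E (Suc Q)) + W = m (E Q) + m S then blowups W (lift H D) Q ?m' else 0)"
    by (simp add: bl_step_def)
  show ?case
  proof (cases "chart W D (Suc Q) m")
    case True
    then have a: "m (E (Suc Q)) + W = m (E Q) + m S" "chart W D Q ?m'" using eq by blast+
    have "blowups W (lift H D) Q ?m' = coeff (H (m S)) (m (E 0))"
      using Suc[of ?m'] a(2) m'1 by (simp del: fun_upd_apply)
    then show ?thesis using st a(1) True by simp
  next
    case False
    then have a: "\<not> (m (E (Suc Q)) + W = m (E Q) + m S \<and> chart W D Q ?m')" using eq by blast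
    show ?thesis
    proof (cases "m (E (Suc Q)) + W = m (E Q) + m S")
      case True
      then have "\<not> chart W D Q ?m'" using a by blast
      then show ?thesis using st True False Suc[of ?m'] by (simp del: fun_upd_apply)
    next
      case f2: False
      then show ?thesis using st False by simp
    qed
  qed
qed

definition mk :: "nat \<Rightarrow> nat \<Rightarrow> nat \<Rightarrow> nat \<Rightarrow> nat \<Rightarrow> mono" where
  "mk W D Q a n = (\<lambda>v. case v of S \<Rightarrow> a | T \<Rightarrow> D - a
     | E j \<Rightarrow> if j \<le> Q then nat (int n - int j * (int W - int a)) else 0)"

definition valid :: "nat \<Rightarrow> nat \<Rightarrow> nat \<Rightarrow> nat \<Rightarrow> bool" where
  "valid W Q a n \<longleftrightarrow> int Q * (int W - int a) \<le> int n"

lemma valid_le: "valid W Q a n \<Longrightarrow> j \<le> Q \<Longrightarrow> int j * (int W - int a) \<le> int n"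
proof -
  assume v: "valid W Q a n" and j: "j \<le> Q"
  have v': "int Q * (int W - int a) \<le> int n" using v unfolding valid_def .
  show ?thesis
  proof (cases "int W - int a \<ge> 0")
    case True
    have "int j * (int W - int a) \<le> int Q * (int W - int a)"
      by (rule mult_right_mono) (use j True in simp_all)
    then show ?thesis using v' by linarith
  next
    case False
    have "int j * (int W - int a) \<le> 0"
      by (rule mult_nonneg_nonpos) (use False in simp_all)
    then show ?thesis by linarith
  qed
qed

lemma mk_simps [simp]:
  "mk W D Q a n S = a" "mk W D Q a n T = D - a"
  "mk W D Q a n (E j) = (if j \<le> Q then nat (int n - int j * (int W - int a)) else 0)"
  by (auto simp: mk_def)

lemma mk_E0: "mk W D Q a n (E 0) = n" by simp

lemma chart_iff: "chart W D Q m \<longleftrightarrow> (\<exists>a n. a \<le> D \<and> valid W Q a n \<and> m = mk W D Q a n)"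
proof
  assume c: "chart W D Q m"
  have cu: "m S + m T = D \<and> (\<forall>j>Q. m (E j) = 0) \<and>
     (\<forall>j\<le>Q. int (m (E j)) = int (m (E 0)) - int j * (int W - int (m S)))"
    using c unfolding chart_def .
  note c1 = cu[THEN conjunct1] and c2 = cu[THEN conjunct2, THEN conjunct1]
      and c3 = cu[THEN conjunct2, THEN conjunct2]
  have q: "int (m (E Q)) = int (m (E 0)) - int Q * (int W - int (m S))"
    by (rule c3[rule_format, OF le_refl])
  have v: "valid W Q (m S) (m (E 0))"
    unfolding valid_def using q by linarith
  have "m = mk W D Q (m S) (m (E 0))"
  proof
    fix v show "m v = mk W D Q (m S) (m (E 0)) v"
    proof (cases v)
      case S then show ?thesis by simp
    next
      case T then show ?thesis using c1 by simp
    next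
      case (E j)
      show ?thesis
      proof (cases "j \<le> Q")
        case True
        have "int (m (E j)) = int (m (E 0)) - int j * (int W - int (m S))"
          by (rule c3[rule_format, OF True])
        then have "m (E j) = nat (int (m (E 0)) - int j * (int W - int (m S)))" by linarith
        then show ?thesis using E True by (simp only: mk_simps if_True)
      next
        case False
        then have "m (E j) = 0" using c2 by simp
        then show ?thesis using E False by simp
      qed
    qed
  qed
  moreover have "m S \<le> D" using c1 by simp
  ultimately show "\<exists>a n. a \<le> D \<and> valid W Q a n \<and> m = mk W D Q a n" using v by blast
next
  assume "\<exists>a n. a \<le> D \<and> valid W Q a n \<and> m = mk W D Q a n"
  then obtain a n where h: "a \<le> D" "valid W Q a n" "m = mk W D Q a n" by blast
  have e0: "m (E 0) = n" using h(3) by simp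
  have c1: "m S + m T = D" using h(1,3) by simp
  have c2: "\<forall>j>Q. m (E j) = 0" using h(3) by simp
  have c3: "\<forall>j\<le>Q. int (m (E j)) = int (m (E 0)) - int j * (int W - int (m S))"
  proof (intro allI impI)
    fix j assume j: "j \<le> Q"
    have "int j * (int W - int a) \<le> int n" by (rule valid_le[OF h(2) j])
    then show "int (m (E j)) = int (m (E 0)) - int j * (int W - int (m S))"
      using h(3) j e0 by simp
  qed
  show "chart W D Q m" unfolding chart_def by (intro conjI c1 c2 c3)
qed

lemma blow_mk:
  "blowups W (lift H D) Q m = (if \<exists>a n. a \<le> D \<and> valid W Q a n \<and> m = mk W D Q a n
      then coeff (H (m S)) (m (E 0)) else 0)"
  by (simp only: blow_chart chart_iff)

lemma blow_mk_val:
  "a \<le> D \<Longrightarrow> valid W Q a n \<Longrightarrow> blowups W (lift H D) Q (mk W D Q a n) = coeff (H a) n"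
  by (auto simp: blow_mk)

lemma blow_nz:
  "blowups W (lift H D) Q m \<noteq> 0 \<Longrightarrow>
     \<exists>a n. a \<le> D \<and> valid W Q a n \<and> m = mk W D Q a n \<and> coeff (H a) n \<noteq> 0"
  by (auto simp: blow_mk split: if_splits)

lemma mk_inj: "mk W D Q a n = mk W D Q a' n' \<Longrightarrow> a = a' \<and> n = n'"
  by (metis mk_E0 mk_simps(1))

definition addsh :: "(nat \<Rightarrow> nat) \<Rightarrow> mono \<Rightarrow> mono" where
  "addsh sh m = (\<lambda>v. case v of E q \<Rightarrow> m v + sh q | _ \<Rightarrow> m v)"
definition unsh :: "(nat \<Rightarrow> nat) \<Rightarrow> mono \<Rightarrow> mono" where
  "unsh sh m = (\<lambda>v. case v of E q \<Rightarrow> m v - sh q | _ \<Rightarrow> m v)"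

lemma addsh_simps [simp]: "addsh sh m S = m S" "addsh sh m T = m T" "addsh sh m (E q) = m (E q) + sh q"
  by (simp_all add: addsh_def)
lemma unsh_simps [simp]: "unsh sh m S = m S" "unsh sh m T = m T" "unsh sh m (E q) = m (E q) - sh q"
  by (simp_all add: unsh_def)

lemma addsh_unsh: "(\<forall>q. sh q \<le> m (E q)) \<Longrightarrow> addsh sh (unsh sh m) = m"
proof
  fix v assume "\<forall>q. sh q \<le> m (E q)" then show "addsh sh (unsh sh m) v = m v" by (cases v) auto
qed

lemma unsh_addsh: "unsh sh (addsh sh m) = m"
proof
  fix v show "unsh sh (addsh sh m) v = m v" by (cases v) auto
qed

lemma addsh_0: "addsh (\<lambda>_. 0) m = m"
proof
  fix v show "addsh (\<lambda>_. 0) m v = m v" by (cases v) auto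
qed

lemma R1:
  assumes H1: "\<forall>m. c0 m \<noteq> 0 \<longrightarrow> (\<forall>q. sh q \<le> m (E q))"
  shows "restr (\<lambda>m. c0 (addsh sh m)) p v =
     (\<Sum>m0\<in>{m0. c0 m0 \<noteq> 0 \<and> m0 (E p) = sh p}. monom (c0 m0) (unsh sh m0 v))"
proof -
  define M0 where "M0 = {m0. c0 m0 \<noteq> 0 \<and> m0 (E p) = sh p}"
  define M where "M = {m. c0 (addsh sh m) \<noteq> 0 \<and> m (E p) = 0}"
  have bij: "bij_betw (unsh sh) M0 M"
    unfolding bij_betw_def
  proof
    show "inj_on (unsh sh) M0"
    proof (rule inj_onI)
      fix x y assume xy: "x \<in> M0" "y \<in> M0" "unsh sh x = unsh sh y"
      have "x = addsh sh (unsh sh x)" using xy(1) H1 addsh_unsh unfolding M0_def by auto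
      also have "\<dots> = addsh sh (unsh sh y)" using xy(3) by simp
      also have "\<dots> = y" using xy(2) H1 addsh_unsh unfolding M0_def by auto
      finally show "x = y" .
    qed
    show "unsh sh ` M0 = M"
    proof
      show "unsh sh ` M0 \<subseteq> M"
      proof
        fix m assume "m \<in> unsh sh ` M0"
        then obtain m0 where m0: "m0 \<in> M0" "m = unsh sh m0" by blast
        have "addsh sh m = m0" using m0 H1 addsh_unsh unfolding M0_def by auto
        then show "m \<in> M" using m0 unfolding M0_def M_def by auto
      qed
      show "M \<subseteq> unsh sh ` M0"
      proof
        fix m assume m: "m \<in> M"
        have "addsh sh m \<in> M0" using m unfolding M_def M0_def by simp
        moreover have "m = unsh sh (addsh sh m)" by (simp add: unsh_addsh)
        ultimately show "m \<in> unsh sh ` M0" by blast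
      qed
    qed
  qed
  have "restr (\<lambda>m. c0 (addsh sh m)) p v = (\<Sum>m\<in>M. monom (c0 (addsh sh m)) (m v))"
    unfolding restr_def M_def by simp
  also have "\<dots> = (\<Sum>m0\<in>M0. monom (c0 (addsh sh (unsh sh m0))) (unsh sh m0 v))"
    by (rule sum.reindex_bij_betw[OF bij, symmetric])
  also have "\<dots> = (\<Sum>m0\<in>M0. monom (c0 m0) (unsh sh m0 v))"
  proof (rule sum.cong)
    fix m0 assume "m0 \<in> M0"
    then have "addsh sh (unsh sh m0) = m0" using H1 addsh_unsh unfolding M0_def by auto
    then show "monom (c0 (addsh sh (unsh sh m0))) (unsh sh m0 v) = monom (c0 m0) (unsh sh m0 v)" by simp
  qed simp
  finally show ?thesis unfolding M0_def .
qed

lemma R2: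
  "(\<Sum>m0\<in>{m0. blowups W (lift H D) Q m0 \<noteq> 0 \<and> Pr m0}. f (blowups W (lift H D) Q m0) m0) =
   (\<Sum>x\<in>{x. fst x \<le> D \<and> valid W Q (fst x) (snd x) \<and> coeff (H (fst x)) (snd x) \<noteq> 0
        \<and> Pr (mk W D Q (fst x) (snd x))}. f (coeff (H (fst x)) (snd x)) (mk W D Q (fst x) (snd x)))"
proof -
  define X where "X = {x. fst x \<le> D \<and> valid W Q (fst x) (snd x) \<and> coeff (H (fst x)) (snd x) \<noteq> 0
        \<and> Pr (mk W D Q (fst x) (snd x))}"
  define M0 where "M0 = {m0. blowups W (lift H D) Q m0 \<noteq> 0 \<and> Pr m0}"
  define h where "h = (\<lambda>x. mk W D Q (fst x) (snd x))"
  have bij: "bij_betw h X M0"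
    unfolding bij_betw_def
  proof
    show "inj_on h X"
      by (rule inj_onI) (metis h_def mk_inj prod.expand)
    show "h ` X = M0"
    proof
      show "h ` X \<subseteq> M0"
        using blow_mk_val unfolding X_def M0_def h_def by force
      show "M0 \<subseteq> h ` X"
      proof
        fix m assume m: "m \<in> M0"
        then obtain a n where an: "a \<le> D" "valid W Q a n" "m = mk W D Q a n" "coeff (H a) n \<noteq> 0"
          using blow_nz unfolding M0_def by blast
        then have "(a, n) \<in> X" using m unfolding X_def M0_def by simp
        then show "m \<in> h ` X" using an(3) unfolding h_def by force
      qed
    qed
  qed
  have "(\<Sum>m0\<in>M0. f (blowups W (lift H D) Q m0) m0) = (\<Sum>x\<in>X. f (blowups W (lift H D) Q (h x)) (h x))"
    by (rule sum.reindex_bij_betw[OF bij, symmetric])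
  also have "\<dots> = (\<Sum>x\<in>X. f (coeff (H (fst x)) (snd x)) (mk W D Q (fst x) (snd x)))"
    by (rule sum.cong) (auto simp: X_def h_def blow_mk_val)
  finally show ?thesis unfolding X_def M0_def .
qed

lemma coeff_bc: "0 < k \<Longrightarrow> coeff (bc k H a) n = (if k dvd n then coeff (H a) (n div k) else 0)"
  unfolding bc_def by (rule coeff_pcomp_monom)

lemma valid_mult: "0 < k \<Longrightarrow> valid W (k * Q) a (k * n) \<longleftrightarrow> valid W Q a n"
proof -
  assume k: "0 < k"
  have "int (k * Q) * (int W - int a) = int k * (int Q * (int W - int a))" by simp
  moreover have "int (k * n) = int k * int n" by simp
  ultimately show ?thesis unfolding valid_def using k
    by (metis mult_le_cancel_left_pos of_nat_0_less_iff)
qed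

lemma R2bar:
  assumes k: "0 < k"
  shows "(\<Sum>m0\<in>{m0. blowups W (lift (bc k H) D) (k * Q) m0 \<noteq> 0 \<and> Pr m0}. f (blowups W (lift (bc k H) D) (k * Q) m0) m0) =
   (\<Sum>x\<in>{x. fst x \<le> D \<and> valid W Q (fst x) (snd x) \<and> coeff (H (fst x)) (snd x) \<noteq> 0
        \<and> Pr (mk W D (k * Q) (fst x) (k * snd x))}. f (coeff (H (fst x)) (snd x)) (mk W D (k * Q) (fst x) (k * snd x)))"
proof -
  define X where "X = {x. fst x \<le> D \<and> valid W Q (fst x) (snd x) \<and> coeff (H (fst x)) (snd x) \<noteq> 0
        \<and> Pr (mk W D (k * Q) (fst x) (k * snd x))}"
  define M0 where "M0 = {m0. blowups W (lift (bc k H) D) (k * Q) m0 \<noteq> 0 \<and> Pr m0}"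
  define h where "h = (\<lambda>x. mk W D (k * Q) (fst x) (k * snd x))"
  have val: "blowups W (lift (bc k H) D) (k * Q) (h x) = coeff (H (fst x)) (snd x)"
    if "x \<in> X" for x
  proof -
    have "valid W (k * Q) (fst x) (k * snd x)" using that valid_mult[OF k] unfolding X_def by simp
    then have "blowups W (lift (bc k H) D) (k * Q) (h x) = coeff (bc k H (fst x)) (k * snd x)"
      using that blow_mk_val unfolding X_def h_def by auto
    also have "\<dots> = coeff (H (fst x)) (snd x)" using k by (simp add: coeff_bc)
    finally show ?thesis .
  qed
  have bij: "bij_betw h X M0"
    unfolding bij_betw_def
  proof
    show "inj_on h X"
    proof (rule inj_onI)
      fix x y assume "h x = h y"
      then have "fst x = fst y \<and> k * snd x = k * snd y" unfolding h_def by (rule mk_inj)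
      then show "x = y" using k by (simp add: prod.expand)
    qed
    show "h ` X = M0"
    proof
      show "h ` X \<subseteq> M0"
      proof
        fix m assume "m \<in> h ` X"
        then obtain x where x: "x \<in> X" "m = h x" by blast
        then show "m \<in> M0" using val[OF x(1)] unfolding M0_def X_def h_def by auto
      qed
      show "M0 \<subseteq> h ` X"
      proof
        fix m assume m: "m \<in> M0"
        then obtain a n where an: "a \<le> D" "valid W (k * Q) a n" "m = mk W D (k * Q) a n" "coeff (bc k H a) n \<noteq> 0"
          using blow_nz unfolding M0_def by blast
        then have dv: "k dvd n" and cn: "coeff (H a) (n div k) \<noteq> 0" using k by (auto simp: coeff_bc split: if_splits)
        then have nn: "n = k * (n div k)" by simp
        have "valid W Q a (n div k)" using an(2) nn valid_mult[OF k] by metis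
        then have "(a, n div k) \<in> X" using m an cn nn unfolding X_def M0_def by simp
        moreover have "m = h (a, n div k)" using an(3) nn unfolding h_def by simp
        ultimately show "m \<in> h ` X" by blast
      qed
    qed
  qed
  have "(\<Sum>m0\<in>M0. f (blowups W (lift (bc k H) D) (k * Q) m0) m0) =
        (\<Sum>x\<in>X. f (blowups W (lift (bc k H) D) (k * Q) (h x)) (h x))"
    by (rule sum.reindex_bij_betw[OF bij, symmetric])
  also have "\<dots> = (\<Sum>x\<in>X. f (coeff (H (fst x)) (snd x)) (mk W D (k * Q) (fst x) (k * snd x)))"
  proof (rule sum.cong)
    fix x assume "x \<in> X"
    then show "f (blowups W (lift (bc k H) D) (k * Q) (h x)) (h x) =
        f (coeff (H (fst x)) (snd x)) (mk W D (k * Q) (fst x) (k * snd x))"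
      using val[of x] unfolding h_def by simp
  qed simp
  finally show ?thesis unfolding X_def M0_def .
qed

definition VV :: "nat \<Rightarrow> nat \<Rightarrow> nat \<Rightarrow> (nat \<Rightarrow> complex poly) \<Rightarrow> (nat \<times> nat) set" where
  "VV W D Q H = {x. fst x \<le> D \<and> valid W Q (fst x) (snd x) \<and> coeff (H (fst x)) (snd x) \<noteq> 0}"

lemma RESTR:
  assumes H1: "\<forall>m. blowups W (lift H D) Q m \<noteq> 0 \<longrightarrow> (\<forall>q. sh q \<le> m (E q))"
  shows "restr (\<lambda>m. blowups W (lift H D) Q (addsh sh m)) p v =
    (\<Sum>x\<in>{x\<in>VV W D Q H. mk W D Q (fst x) (snd x) (E p) = sh p}.
        monom (coeff (H (fst x)) (snd x)) (unsh sh (mk W D Q (fst x) (snd x)) v))"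
proof -
  have "restr (\<lambda>m. blowups W (lift H D) Q (addsh sh m)) p v =
     (\<Sum>m0\<in>{m0. blowups W (lift H D) Q m0 \<noteq> 0 \<and> m0 (E p) = sh p}.
        monom (blowups W (lift H D) Q m0) (unsh sh m0 v))"
    by (rule R1[OF H1])
  also have "\<dots> = (\<Sum>x\<in>{x. fst x \<le> D \<and> valid W Q (fst x) (snd x) \<and> coeff (H (fst x)) (snd x) \<noteq> 0
        \<and> mk W D Q (fst x) (snd x) (E p) = sh p}.
        monom (coeff (H (fst x)) (snd x)) (unsh sh (mk W D Q (fst x) (snd x)) v))"
    by (rule R2[where Pr = "\<lambda>m0. m0 (E p) = sh p" and f = "\<lambda>c m0. monom c (unsh sh m0 v)"])
  also have "{x. fst x \<le> D \<and> valid W Q (fst x) (snd x) \<and> coeff (H (fst x)) (snd x) \<noteq> 0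
        \<and> mk W D Q (fst x) (snd x) (E p) = sh p} = {x\<in>VV W D Q H. mk W D Q (fst x) (snd x) (E p) = sh p}"
    unfolding VV_def by auto
  finally show ?thesis .
qed

lemma RESTRbar:
  assumes k: "0 < k"
    and H1: "\<forall>m. blowups W (lift (bc k H) D) (k * Q) m \<noteq> 0 \<longrightarrow> (\<forall>q. sh q \<le> m (E q))"
  shows "restr (\<lambda>m. blowups W (lift (bc k H) D) (k * Q) (addsh sh m)) p v =
    (\<Sum>x\<in>{x\<in>VV W D Q H. mk W D (k * Q) (fst x) (k * snd x) (E p) = sh p}.
        monom (coeff (H (fst x)) (snd x)) (unsh sh (mk W D (k * Q) (fst x) (k * snd x)) v))"
proof -
  have "restr (\<lambda>m. blowups W (lift (bc k H) D) (k * Q) (addsh sh m)) p v =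
     (\<Sum>m0\<in>{m0. blowups W (lift (bc k H) D) (k * Q) m0 \<noteq> 0 \<and> m0 (E p) = sh p}.
        monom (blowups W (lift (bc k H) D) (k * Q) m0) (unsh sh m0 v))"
    by (rule R1[OF H1])
  also have "\<dots> = (\<Sum>x\<in>{x. fst x \<le> D \<and> valid W Q (fst x) (snd x) \<and> coeff (H (fst x)) (snd x) \<noteq> 0
        \<and> mk W D (k * Q) (fst x) (k * snd x) (E p) = sh p}.
        monom (coeff (H (fst x)) (snd x)) (unsh sh (mk W D (k * Q) (fst x) (k * snd x)) v))"
    by (rule R2bar[OF k, where Pr = "\<lambda>m0. m0 (E p) = sh p" and f = "\<lambda>c m0. monom c (unsh sh m0 v)"])
  also have "{x. fst x \<le> D \<and> valid W Q (fst x) (snd x) \<and> coeff (H (fst x)) (snd x) \<noteq> 0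
        \<and> mk W D (k * Q) (fst x) (k * snd x) (E p) = sh p} = {x\<in>VV W D Q H. mk W D (k * Q) (fst x) (k * snd x) (E p) = sh p}"
    unfolding VV_def by auto
  finally show ?thesis .
qed

lemma restr_cmp:
  assumes k: "0 < k" and pQ: "p \<le> Q"
    and H1: "\<forall>m. blowups W (lift H D) Q m \<noteq> 0 \<longrightarrow> (\<forall>q. sh q \<le> m (E q))"
    and H1b: "\<forall>m. blowups W (lift (bc k H) D) (k * Q) m \<noteq> 0 \<longrightarrow> (\<forall>q. shb q \<le> m (E q))"
    and hp: "\<forall>x\<in>VV W D Q H. shb (k * p) = k * sh p"
    and hv: "\<forall>x\<in>VV W D Q H. mk W D Q (fst x) (snd x) (E p) = sh p \<longrightarrow>
        unsh sh (mk W D Q (fst x) (snd x)) v = unsh shb (mk W D (k * Q) (fst x) (k * snd x)) vb"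
  shows "restr (\<lambda>m. blowups W (lift (bc k H) D) (k * Q) (addsh shb m)) (k * p) vb =
         restr (\<lambda>m. blowups W (lift H D) Q (addsh sh m)) p v"
proof -
  have seteq: "{x\<in>VV W D Q H. mk W D (k * Q) (fst x) (k * snd x) (E (k * p)) = shb (k * p)} =
        {x\<in>VV W D Q H. mk W D Q (fst x) (snd x) (E p) = sh p}"
  proof (rule Collect_cong)
    fix x
    show "(x \<in> VV W D Q H \<and> mk W D (k * Q) (fst x) (k * snd x) (E (k * p)) = shb (k * p)) =
          (x \<in> VV W D Q H \<and> mk W D Q (fst x) (snd x) (E p) = sh p)"
    proof (cases "x \<in> VV W D Q H")
      case True
      then have v: "valid W Q (fst x) (snd x)" unfolding VV_def by simp
      have z: "0 \<le> int (snd x) - int p * (int W - int (fst x))" using valid_le[OF v pQ] by simp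
      have kp: "k * p \<le> k * Q" using pQ by simp
      have "mk W D (k * Q) (fst x) (k * snd x) (E (k * p)) =
            nat (int k * (int (snd x) - int p * (int W - int (fst x))))"
        using kp by (simp add: algebra_simps)
      also have "\<dots> = k * mk W D Q (fst x) (snd x) (E p)"
        using pQ z by (simp add: nat_mult_distrib)
      finally have eqk: "mk W D (k * Q) (fst x) (k * snd x) (E (k * p)) = k * mk W D Q (fst x) (snd x) (E p)" .
      have hp': "shb (k * p) = k * sh p" using hp True by blast
      have "(mk W D (k * Q) (fst x) (k * snd x) (E (k * p)) = shb (k * p)) \<longleftrightarrow> (mk W D Q (fst x) (snd x) (E p) = sh p)"
        unfolding eqk hp' using k by (simp del: mk_simps)
      then show ?thesis using True by simp
    qed simp
  qed
  show ?thesis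
    unfolding RESTR[OF H1] RESTRbar[OF k H1b] seteq
    by (rule sum.cong) (use hv in auto)
qed

lemma k3ord_cmp:
  assumes "restr cb pb (nextv Pb pb) = restr c p (nextv P p)"
    and "restr cb pb (prevv pb) = restr c p (prevv p)"
  shows "k3ord cb Pb pb x y = k3ord c P p x y"
  unfolding k3ord_def using assms by simp

lemma lowb:
  assumes H1: "\<forall>m. blowups W (lift H D) Q m \<noteq> 0 \<longrightarrow> (\<forall>q. sh q \<le> m (E q))"
    and x: "x \<in> VV W D Q H"
  shows "sh q \<le> mk W D Q (fst x) (snd x) (E q)"
proof -
  have "blowups W (lift H D) Q (mk W D Q (fst x) (snd x)) = coeff (H (fst x)) (snd x)"
    using x blow_mk_val unfolding VV_def by auto
  then have "blowups W (lift H D) Q (mk W D Q (fst x) (snd x)) \<noteq> 0" using x unfolding VV_def by simp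
  then show ?thesis using H1 by blast
qed

lemma lowb_bar:
  assumes k: "0 < k"
    and H1: "\<forall>m. blowups W (lift (bc k H) D) (k * Q) m \<noteq> 0 \<longrightarrow> (\<forall>q. sh q \<le> m (E q))"
    and x: "x \<in> VV W D Q H"
  shows "sh q \<le> mk W D (k * Q) (fst x) (k * snd x) (E q)"
proof -
  have v: "valid W (k * Q) (fst x) (k * snd x)" using x valid_mult[OF k] unfolding VV_def by simp
  have "blowups W (lift (bc k H) D) (k * Q) (mk W D (k * Q) (fst x) (k * snd x)) = coeff (bc k H (fst x)) (k * snd x)"
    using x v blow_mk_val unfolding VV_def by auto
  also have "\<dots> = coeff (H (fst x)) (snd x)" using k by (simp add: coeff_bc)
  finally have "blowups W (lift (bc k H) D) (k * Q) (mk W D (k * Q) (fst x) (k * snd x)) \<noteq> 0"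
    using x unfolding VV_def by simp
  then show ?thesis using H1 by blast
qed

lemma hv_next:
  assumes k: "0 < k" and pQ: "p < Q" and v: "valid W Q a n"
    and ep: "mk W D Q a n (E p) = sh p"
    and L1: "sh (Suc p) \<le> mk W D Q a n (E (Suc p))"
    and L2: "shb (Suc (k * p)) \<le> mk W D (k * Q) a (k * n) (E (Suc (k * p)))"
    and rel: "shb (Suc (k * p)) + sh p = k * sh p + sh (Suc p)"
  shows "unsh sh (mk W D Q a n) (E (Suc p)) = unsh shb (mk W D (k * Q) a (k * n)) (E (Suc (k * p)))"
proof -
  define z where "z = int n - int p * (int W - int a)"
  define w where "w = int W - int a"
  have vk: "valid W (k * Q) a (k * n)" using v valid_mult[OF k] by simp
  have kp: "Suc (k * p) \<le> k * Q"
  proof -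
    have "Suc p \<le> Q" using pQ by simp
    then have "k * Suc p \<le> k * Q" by (rule mult_le_mono2)
    moreover have "Suc (k * p) \<le> k * Suc p" using k by simp
    ultimately show ?thesis by linarith
  qed
  have nn0: "0 \<le> z" using valid_le[OF v, of p] pQ unfolding z_def by simp
  have nn1: "0 \<le> z - w" using valid_le[OF v, of "Suc p"] pQ unfolding z_def w_def by (simp add: algebra_simps)
  have nn2: "0 \<le> int k * z - w" using valid_le[OF vk kp] unfolding z_def w_def by (simp add: algebra_simps)
  have m0: "int (mk W D Q a n (E p)) = z" using pQ nn0 unfolding z_def by simp
  have m1: "int (mk W D Q a n (E (Suc p))) = z - w" using pQ nn1 unfolding z_def w_def by (simp add: algebra_simps)
  have m2: "int (mk W D (k * Q) a (k * n) (E (Suc (k * p)))) = int k * z - w"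
    using kp nn2 unfolding z_def w_def by (simp add: algebra_simps)
  have zs: "z = int (sh p)" using m0 ep by simp
  have rel': "int (shb (Suc (k * p))) + int (sh p) = int k * int (sh p) + int (sh (Suc p))"
    using rel by (metis of_nat_add of_nat_mult)
  have "int (unsh sh (mk W D Q a n) (E (Suc p))) = z - w - int (sh (Suc p))"
    using L1 m1 by (simp add: of_nat_diff)
  also have "\<dots> = int k * z - w - int (shb (Suc (k * p)))" using rel' zs by simp
  also have "\<dots> = int (unsh shb (mk W D (k * Q) a (k * n)) (E (Suc (k * p))))"
    using L2 m2 by (simp add: of_nat_diff)
  finally show ?thesis by simp
qed

lemma hv_prev:
  assumes k: "0 < k" and pQ: "p \<le> Q" and p0: "0 < p" and v: "valid W Q a n"
    and ep: "mk W D Q a n (E p) = sh p"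
    and L1: "sh (p - 1) \<le> mk W D Q a n (E (p - 1))"
    and L2: "shb (k * p - 1) \<le> mk W D (k * Q) a (k * n) (E (k * p - 1))"
    and rel: "shb (k * p - 1) + sh p = k * sh p + sh (p - 1)"
  shows "unsh sh (mk W D Q a n) (E (p - 1)) = unsh shb (mk W D (k * Q) a (k * n)) (E (k * p - 1))"
proof -
  define z where "z = int n - int p * (int W - int a)"
  define w where "w = int W - int a"
  have vk: "valid W (k * Q) a (k * n)" using v valid_mult[OF k] by simp
  have kp1: "k * p - 1 \<le> k * Q" using pQ by (meson diff_le_self le_trans mult_le_mono2)
  have kp0: "1 \<le> k * p" using k p0 by (simp add: Suc_le_eq)
  have ip1: "int (p - 1) = int p - 1" using p0 by simp
  have ik1: "int (k * p - 1) = int k * int p - 1" using kp0 by simp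
  have nn0: "0 \<le> z" using valid_le[OF v pQ] unfolding z_def by simp
  have nn1: "0 \<le> z + w" using valid_le[OF v, of "p - 1"] pQ ip1 unfolding z_def w_def by (simp add: algebra_simps)
  have f2: "(int k * int p - 1) * w \<le> int (k * n)" using valid_le[OF vk kp1] ik1 unfolding w_def by simp
  have i2: "int k * z + w = int (k * n) - (int k * int p - 1) * w" unfolding z_def w_def by (simp add: algebra_simps)
  have nn2: "0 \<le> int k * z + w" using f2 i2 by linarith
  have m0: "int (mk W D Q a n (E p)) = z" using pQ nn0 unfolding z_def by simp
  have m1: "int (mk W D Q a n (E (p - 1))) = z + w" using pQ nn1 ip1 unfolding z_def w_def by (simp add: algebra_simps)
  have m2a: "mk W D (k * Q) a (k * n) (E (k * p - 1)) = nat (int (k * n) - int (k * p - 1) * w)"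
    using kp1 unfolding w_def by simp
  have m2b: "int (k * n) - int (k * p - 1) * w = int k * z + w" using i2 ik1 by simp
  have m2: "int (mk W D (k * Q) a (k * n) (E (k * p - 1))) = int k * z + w"
    unfolding m2a m2b using nn2 by simp
  have zs: "z = int (sh p)" using m0 ep by simp
  have rel': "int (shb (k * p - 1)) + int (sh p) = int k * int (sh p) + int (sh (p - 1))"
    using rel by (metis of_nat_add of_nat_mult)
  have "int (unsh sh (mk W D Q a n) (E (p - 1))) = z + w - int (sh (p - 1))"
    using L1 m1 by (simp add: of_nat_diff)
  also have "\<dots> = int k * z + w - int (shb (k * p - 1))" using rel' zs by simp
  also have "\<dots> = int (unsh shb (mk W D (k * Q) a (k * n)) (E (k * p - 1)))"
    using L2 m2 by (simp add: of_nat_diff)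
  finally show ?thesis by simp
qed

lemma k3_cmp:
  assumes k: "0 < k" and pQ: "p \<le> Q"
    and H1: "\<forall>m. blowups W (lift H D) Q m \<noteq> 0 \<longrightarrow> (\<forall>q. sh q \<le> m (E q))"
    and H1b: "\<forall>m. blowups W (lift (bc k H) D) (k * Q) m \<noteq> 0 \<longrightarrow> (\<forall>q. shb q \<le> m (E q))"
    and hp: "\<forall>x\<in>VV W D Q H. shb (k * p) = k * sh p"
    and hn: "p < Q \<Longrightarrow> \<forall>x\<in>VV W D Q H. shb (Suc (k * p)) + sh p = k * sh p + sh (Suc p)"
    and hpr: "0 < p \<Longrightarrow> \<forall>x\<in>VV W D Q H. shb (k * p - 1) + sh p = k * sh p + sh (p - 1)"
  shows "k3ord (\<lambda>m. blowups W (lift (bc k H) D) (k * Q) (addsh shb m)) (k * Q) (k * p) x y =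
         k3ord (\<lambda>m. blowups W (lift H D) Q (addsh sh m)) Q p x y"
proof (rule k3ord_cmp)
  show "restr (\<lambda>m. blowups W (lift (bc k H) D) (k * Q) (addsh shb m)) (k * p) (nextv (k * Q) (k * p)) =
        restr (\<lambda>m. blowups W (lift H D) Q (addsh sh m)) p (nextv Q p)"
  proof (cases "p = Q")
    case True
    then have n1: "nextv Q p = S" "nextv (k * Q) (k * p) = S" by (simp_all add: nextv_def)
    show ?thesis unfolding n1
      by (rule restr_cmp[OF k pQ H1 H1b hp]) simp
  next
    case False
    then have pl: "p < Q" using pQ by simp
    have kne: "k * p \<noteq> k * Q" using False k by simp
    then have n1: "nextv Q p = E (Suc p)" "nextv (k * Q) (k * p) = E (Suc (k * p))"
      using False by (simp_all add: nextv_def)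
    show ?thesis unfolding n1
    proof (rule restr_cmp[OF k pQ H1 H1b hp], intro ballI impI)
      fix x assume x: "x \<in> VV W D Q H" and ep: "mk W D Q (fst x) (snd x) (E p) = sh p"
      have v: "valid W Q (fst x) (snd x)" using x unfolding VV_def by simp
      show "unsh sh (mk W D Q (fst x) (snd x)) (E (Suc p)) =
            unsh shb (mk W D (k * Q) (fst x) (k * snd x)) (E (Suc (k * p)))"
        by (rule hv_next[where sh=sh and shb=shb, OF k pl v ep lowb[OF H1 x, of "Suc p"] lowb_bar[OF k H1b x, of "Suc (k * p)"]]) (use hn[OF pl] x in blast)
    qed
  qed
  show "restr (\<lambda>m. blowups W (lift (bc k H) D) (k * Q) (addsh shb m)) (k * p) (prevv (k * p)) =
        restr (\<lambda>m. blowups W (lift H D) Q (addsh sh m)) p (prevv p)"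
  proof (cases "p = 0")
    case True
    then have n1: "prevv p = T" "prevv (k * p) = T" by (simp_all add: prevv_def)
    show ?thesis unfolding n1
      by (rule restr_cmp[OF k pQ H1 H1b hp]) simp
  next
    case False
    then have pl: "0 < p" by simp
    have kne: "k * p \<noteq> 0" using False k by simp
    then have n1: "prevv p = E (p - 1)" "prevv (k * p) = E (k * p - 1)"
      using False by (simp_all add: prevv_def)
    show ?thesis unfolding n1
    proof (rule restr_cmp[OF k pQ H1 H1b hp], intro ballI impI)
      fix x assume x: "x \<in> VV W D Q H" and ep: "mk W D Q (fst x) (snd x) (E p) = sh p"
      have v: "valid W Q (fst x) (snd x)" using x unfolding VV_def by simp
      show "unsh sh (mk W D Q (fst x) (snd x)) (E (p - 1)) =
            unsh shb (mk W D (k * Q) (fst x) (k * snd x)) (E (k * p - 1))"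
        by (rule hv_prev[where sh=sh and shb=shb, OF k pQ pl v ep lowb[OF H1 x, of "p - 1"] lowb_bar[OF k H1b x, of "k * p - 1"]]) (use hpr[OF pl] x in blast)
    qed
  qed
qed

lemma k3_cmp0:
  assumes k: "0 < k" and pQ: "p \<le> Q"
  shows "k3ord (blowups W (lift (bc k H) D) (k * Q)) (k * Q) (k * p) x y =
         k3ord (blowups W (lift H D) Q) Q p x y"
proof -
  have e: "\<And>c. (\<lambda>m. c (addsh (\<lambda>_. 0) m)) = c" by (simp add: addsh_0)
  have "k3ord (\<lambda>m. blowups W (lift (bc k H) D) (k * Q) (addsh (\<lambda>_. 0) m)) (k * Q) (k * p) x y =
         k3ord (\<lambda>m. blowups W (lift H D) Q (addsh (\<lambda>_. 0) m)) Q p x y"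
    by (rule k3_cmp[OF k pQ]) simp_all
  then show ?thesis unfolding e .
qed

lemma blow_bar_nz:
  assumes k: "0 < k" and m: "blowups W (lift (bc k H) D) (k * Q) m \<noteq> 0"
  shows "\<exists>x\<in>VV W D Q H. m = mk W D (k * Q) (fst x) (k * snd x)"
proof -
  obtain a n where an: "a \<le> D" "valid W (k * Q) a n" "m = mk W D (k * Q) a n" "coeff (bc k H a) n \<noteq> 0"
    using blow_nz[OF m] by blast
  then have dv: "k dvd n" and cn: "coeff (H a) (n div k) \<noteq> 0" using k by (auto simp: coeff_bc split: if_splits)
  then have nn: "n = k * (n div k)" by simp
  have "valid W Q a (n div k)" using an(2) nn valid_mult[OF k] by metis
  then have "(a, n div k) \<in> VV W D Q H" using an cn unfolding VV_def by simp
  moreover have "m = mk W D (k * Q) (fst (a, n div k)) (k * snd (a, n div k))" using an(3) nn by simp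
  ultimately show ?thesis by blast
qed

lemma blow_bar_val:
  assumes k: "0 < k" and x: "x \<in> VV W D Q H"
  shows "blowups W (lift (bc k H) D) (k * Q) (mk W D (k * Q) (fst x) (k * snd x)) = coeff (H (fst x)) (snd x)"
proof -
  have v: "valid W (k * Q) (fst x) (k * snd x)" using x valid_mult[OF k] unfolding VV_def by simp
  have "blowups W (lift (bc k H) D) (k * Q) (mk W D (k * Q) (fst x) (k * snd x)) = coeff (bc k H (fst x)) (k * snd x)"
    using x v blow_mk_val unfolding VV_def by auto
  also have "\<dots> = coeff (H (fst x)) (snd x)" using k by (simp add: coeff_bc)
  finally show ?thesis .
qed

lemma blow_nz_VV:
  assumes m: "blowups W (lift H D) Q m \<noteq> 0"
  shows "\<exists>x\<in>VV W D Q H. m = mk W D Q (fst x) (snd x)"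
proof -
  obtain a n where an: "a \<le> D" "valid W Q a n" "m = mk W D Q a n" "coeff (H a) n \<noteq> 0"
    using blow_nz[OF m] by blast
  then have "(a, n) \<in> VV W D Q H" unfolding VV_def by simp
  then show ?thesis using an(3) by force
qed

lemma blow_VV_nz:
  assumes x: "x \<in> VV W D Q H"
  shows "blowups W (lift H D) Q (mk W D Q (fst x) (snd x)) \<noteq> 0"
  using x blow_mk_val unfolding VV_def by auto

lemma eord_H1: "\<forall>m. c m \<noteq> 0 \<longrightarrow> (\<forall>q. eord c q \<le> m (E q))"
  unfolding eord_def by (auto intro: Least_le)

lemma eord_wit:
  assumes x0: "x0 \<in> VV W D Q H"
  shows "\<exists>x\<in>VV W D Q H. mk W D Q (fst x) (snd x) (E q) = eord (blowups W (lift H D) Q) q"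
proof -
  let ?c = "blowups W (lift H D) Q"
  have ex: "\<exists>m. ?c m \<noteq> 0 \<and> m (E q) = mk W D Q (fst x0) (snd x0) (E q)"
    using blow_VV_nz[OF x0] by blast
  have "\<exists>m. ?c m \<noteq> 0 \<and> m (E q) = eord ?c q"
    unfolding eord_def by (rule LeastI_ex) (use ex in blast)
  then obtain m where m: "?c m \<noteq> 0" "m (E q) = eord ?c q" by blast
  obtain x where "x \<in> VV W D Q H" "m = mk W D Q (fst x) (snd x)" using blow_nz_VV[OF m(1)] by blast
  then show ?thesis using m(2) by blast
qed

lemma eord_bar:
  assumes k: "0 < k" and x0: "x0 \<in> VV W D Q H"
    and L0: "mk W D (k * Q) (fst x0) (k * snd x0) (E j) = L"
    and Lb: "\<forall>x\<in>VV W D Q H. L \<le> mk W D (k * Q) (fst x) (k * snd x) (E j)"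
  shows "eord (blowups W (lift (bc k H) D) (k * Q)) j = L"
  unfolding eord_def
proof (rule Least_equality)
  show "\<exists>m. blowups W (lift (bc k H) D) (k * Q) m \<noteq> 0 \<and> m (E j) = L"
  proof (intro exI conjI)
    show "blowups W (lift (bc k H) D) (k * Q) (mk W D (k * Q) (fst x0) (k * snd x0)) \<noteq> 0"
      using blow_bar_val[OF k x0] x0 unfolding VV_def by simp
    show "mk W D (k * Q) (fst x0) (k * snd x0) (E j) = L" by (rule L0)
  qed
  fix y assume "\<exists>m. blowups W (lift (bc k H) D) (k * Q) m \<noteq> 0 \<and> m (E j) = y"
  then obtain m where m: "blowups W (lift (bc k H) D) (k * Q) m \<noteq> 0" "m (E j) = y" by blast
  obtain x where "x \<in> VV W D Q H" "m = mk W D (k * Q) (fst x) (k * snd x)" using blow_bar_nz[OF k m(1)] by blast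
  then show "L \<le> y" using Lb m(2) by blast
qed

lemma mk_bar_mid:
  assumes k: "0 < k" and pQ: "p < Q" and j: "j \<le> k" and v: "valid W Q a n"
  shows "mk W D (k * Q) a (k * n) (E (k * p + j)) =
         (k - j) * mk W D Q a n (E p) + j * mk W D Q a n (E (Suc p))"
proof -
  define w where "w = int W - int a"
  define z0 where "z0 = int n - int p * w"
  define z1 where "z1 = int n - int (Suc p) * w"
  have n0: "0 \<le> z0" using valid_le[OF v, of p] pQ unfolding z0_def w_def by simp
  have n1: "0 \<le> z1" using valid_le[OF v, of "Suc p"] pQ unfolding z1_def w_def by simp
  have le: "k * p + j \<le> k * Q"
  proof -
    have "Suc p \<le> Q" using pQ by simp
    then have "k * Suc p \<le> k * Q" by (rule mult_le_mono2)
    then show ?thesis using j by simp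
  qed
  have i: "int (k * n) - int (k * p + j) * w = int (k - j) * z0 + int j * z1"
    unfolding z0_def z1_def using j by (simp add: algebra_simps of_nat_diff)
  have "mk W D (k * Q) a (k * n) (E (k * p + j)) = nat (int (k * n) - int (k * p + j) * w)"
    using le unfolding w_def by simp
  also have "\<dots> = nat (int (k - j) * z0 + int j * z1)" unfolding i ..
  also have "\<dots> = (k - j) * nat z0 + j * nat z1"
    using n0 n1 by (simp add: nat_add_distrib nat_mult_distrib)
  also have "\<dots> = (k - j) * mk W D Q a n (E p) + j * mk W D Q a n (E (Suc p))"
    using pQ unfolding z0_def z1_def w_def by simp
  finally show ?thesis .
qed

lemma mk_bar_kp:
  assumes pQ: "p \<le> Q" and v: "valid W Q a n"
  shows "mk W D (k * Q) a (k * n) (E (k * p)) = k * mk W D Q a n (E p)"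
proof -
  have z: "0 \<le> int n - int p * (int W - int a)" using valid_le[OF v pQ] by simp
  have kp: "k * p \<le> k * Q" using pQ by simp
  have "mk W D (k * Q) a (k * n) (E (k * p)) = nat (int k * (int n - int p * (int W - int a)))"
    using kp by (simp add: algebra_simps)
  also have "\<dots> = k * mk W D Q a n (E p)"
    using pQ z by (simp add: nat_mult_distrib)
  finally show ?thesis .
qed

lemma sh_kp:
  assumes k: "0 < k" and pQ: "p \<le> Q" and x0: "x0 \<in> VV W D Q H"
  shows "eord (blowups W (lift (bc k H) D) (k * Q)) (k * p) = k * eord (blowups W (lift H D) Q) p"
proof -
  let ?c = "blowups W (lift H D) Q"
  obtain x1 where x1: "x1 \<in> VV W D Q H" "mk W D Q (fst x1) (snd x1) (E p) = eord ?c p"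
    using eord_wit[OF x0] by blast
  have v1: "valid W Q (fst x1) (snd x1)" using x1(1) unfolding VV_def by simp
  show ?thesis
  proof (rule eord_bar[OF k x1(1)])
    show "mk W D (k * Q) (fst x1) (k * snd x1) (E (k * p)) = k * eord ?c p"
      using mk_bar_kp[OF pQ v1] x1(2) by simp
    show "\<forall>x\<in>VV W D Q H. k * eord ?c p \<le> mk W D (k * Q) (fst x) (k * snd x) (E (k * p))"
    proof
      fix x assume x: "x \<in> VV W D Q H"
      have v: "valid W Q (fst x) (snd x)" using x unfolding VV_def by simp
      have "eord ?c p \<le> mk W D Q (fst x) (snd x) (E p)" by (rule lowb[OF eord_H1 x])
      then show "k * eord ?c p \<le> mk W D (k * Q) (fst x) (k * snd x) (E (k * p))"
        using mk_bar_kp[OF pQ v] by simp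
    qed
  qed
qed

lemma sh_mid:
  assumes k: "0 < k" and pQ: "p < Q" and j: "j \<le> k" and x0: "x0 \<in> VV W D Q H"
    and e0: "mk W D Q (fst x0) (snd x0) (E p) = eord (blowups W (lift H D) Q) p"
    and e1: "mk W D Q (fst x0) (snd x0) (E (Suc p)) = eord (blowups W (lift H D) Q) (Suc p)"
  shows "eord (blowups W (lift (bc k H) D) (k * Q)) (k * p + j) =
     (k - j) * eord (blowups W (lift H D) Q) p + j * eord (blowups W (lift H D) Q) (Suc p)"
proof -
  let ?c = "blowups W (lift H D) Q"
  have v0: "valid W Q (fst x0) (snd x0)" using x0 unfolding VV_def by simp
  show ?thesis
  proof (rule eord_bar[OF k x0])
    show "mk W D (k * Q) (fst x0) (k * snd x0) (E (k * p + j)) = (k - j) * eord ?c p + j * eord ?c (Suc p)"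
      using mk_bar_mid[OF k pQ j v0] e0 e1 by simp
    show "\<forall>x\<in>VV W D Q H. (k - j) * eord ?c p + j * eord ?c (Suc p) \<le> mk W D (k * Q) (fst x) (k * snd x) (E (k * p + j))"
    proof
      fix x assume x: "x \<in> VV W D Q H"
      have v: "valid W Q (fst x) (snd x)" using x unfolding VV_def by simp
      have l0: "eord ?c p \<le> mk W D Q (fst x) (snd x) (E p)" by (rule lowb[OF eord_H1 x])
      have l1: "eord ?c (Suc p) \<le> mk W D Q (fst x) (snd x) (E (Suc p))" by (rule lowb[OF eord_H1 x])
      have "(k - j) * eord ?c p + j * eord ?c (Suc p) \<le>
            (k - j) * mk W D Q (fst x) (snd x) (E p) + j * mk W D Q (fst x) (snd x) (E (Suc p))"
        using l0 l1 by (intro add_mono mult_le_mono2)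
      then show "(k - j) * eord ?c p + j * eord ?c (Suc p) \<le> mk W D (k * Q) (fst x) (k * snd x) (E (k * p + j))"
        using mk_bar_mid[OF k pQ j v] by simp
    qed
  qed
qed

lemma k3_D:
  assumes k: "0 < k" and pQ: "p \<le> Q"
    and nonsp: "\<forall>p'<Q. \<exists>x\<in>VV W D Q H. mk W D Q (fst x) (snd x) (E p') = eord (blowups W (lift H D) Q) p'
        \<and> mk W D Q (fst x) (snd x) (E (Suc p')) = eord (blowups W (lift H D) Q) (Suc p')"
  shows "k3ord (\<lambda>m. blowups W (lift (bc k H) D) (k * Q) (addsh (eord (blowups W (lift (bc k H) D) (k * Q))) m)) (k * Q) (k * p) x y =
         k3ord (\<lambda>m. blowups W (lift H D) Q (addsh (eord (blowups W (lift H D) Q)) m)) Q p x y"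
proof (rule k3_cmp[OF k pQ eord_H1 eord_H1])
  let ?c = "blowups W (lift H D) Q"
  let ?cb = "blowups W (lift (bc k H) D) (k * Q)"
  show "\<forall>x\<in>VV W D Q H. eord ?cb (k * p) = k * eord ?c p"
    using sh_kp[OF k pQ] by blast
  show "\<forall>x\<in>VV W D Q H. eord ?cb (Suc (k * p)) + eord ?c p = k * eord ?c p + eord ?c (Suc p)" if pl: "p < Q"
  proof -
    obtain x0 where x0: "x0 \<in> VV W D Q H" "mk W D Q (fst x0) (snd x0) (E p) = eord ?c p"
        "mk W D Q (fst x0) (snd x0) (E (Suc p)) = eord ?c (Suc p)" using nonsp pl by blast
    have k1: "1 \<le> k" using k by simp
    have "eord ?cb (k * p + 1) = (k - 1) * eord ?c p + 1 * eord ?c (Suc p)"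
      by (rule sh_mid[OF k pl k1 x0])
    moreover have "(k - 1) * eord ?c p + eord ?c p = k * eord ?c p"
      using k by (metis Suc_diff_1 add.commute mult_Suc)
    ultimately show ?thesis by simp
  qed
  show "\<forall>x\<in>VV W D Q H. eord ?cb (k * p - 1) + eord ?c p = k * eord ?c p + eord ?c (p - 1)" if pl: "0 < p"
  proof -
    have pl': "p - 1 < Q" using pl pQ by simp
    have sp: "Suc (p - 1) = p" using pl by simp
    obtain x0 where x0: "x0 \<in> VV W D Q H" "mk W D Q (fst x0) (snd x0) (E (p - 1)) = eord ?c (p - 1)"
        "mk W D Q (fst x0) (snd x0) (E (Suc (p - 1))) = eord ?c (Suc (p - 1))" using nonsp pl' by blast
    have k1: "k - 1 \<le> k" by simp
    have "eord ?cb (k * (p - 1) + (k - 1)) = (k - (k - 1)) * eord ?c (p - 1) + (k - 1) * eord ?c (Suc (p - 1))"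
      by (rule sh_mid[OF k pl' k1 x0])
    moreover have "k * (p - 1) + (k - 1) = k * p - 1" using k pl
      by (metis Suc_diff_1 add.commute add_Suc_right diff_Suc_1 mult_Suc_right)
    moreover have "k - (k - 1) = 1" using k by simp
    moreover have "(k - 1) * eord ?c p + eord ?c p = k * eord ?c p"
      using k by (metis Suc_diff_1 add.commute mult_Suc)
    ultimately show ?thesis unfolding sp by simp
  qed
qed

lemma coeff_eord_lt: "coeff_eord c q al < enat b \<longleftrightarrow> (\<exists>m. c m \<noteq> 0 \<and> m S = al \<and> m (E q) < b)"
proof (cases "\<exists>m. c m \<noteq> 0 \<and> m S = al")
  case True
  let ?L = "LEAST n. \<exists>m. c m \<noteq> 0 \<and> m S = al \<and> m (E q) = n"
  have ce: "coeff_eord c q al = enat ?L" using True unfolding coeff_eord_def by simp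
  have ex: "\<exists>m. c m \<noteq> 0 \<and> m S = al \<and> m (E q) = ?L"
    by (rule LeastI_ex) (use True in blast)
  show ?thesis
  proof
    assume "coeff_eord c q al < enat b"
    then have "?L < b" using ce by simp
    then show "\<exists>m. c m \<noteq> 0 \<and> m S = al \<and> m (E q) < b" using ex by auto
  next
    assume "\<exists>m. c m \<noteq> 0 \<and> m S = al \<and> m (E q) < b"
    then obtain m where m: "c m \<noteq> 0" "m S = al" "m (E q) < b" by blast
    have "?L \<le> m (E q)" by (rule Least_le) (use m in blast)
    then show "coeff_eord c q al < enat b" using ce m(3) by simp
  qed
next
  case False
  then show ?thesis unfolding coeff_eord_def by auto
qed

lemma coeff_eord_0: "coeff_eord c q al = 0 \<longleftrightarrow> (\<exists>m. c m \<noteq> 0 \<and> m S = al \<and> m (E q) = 0)"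
proof -
  have "coeff_eord c q al = 0 \<longleftrightarrow> coeff_eord c q al < enat 1"
    by (cases "coeff_eord c q al") (simp_all add: one_enat_def zero_enat_def)
  also have "\<dots> \<longleftrightarrow> (\<exists>m. c m \<noteq> 0 \<and> m S = al \<and> m (E q) < 1)" by (rule coeff_eord_lt)
  also have "\<dots> \<longleftrightarrow> (\<exists>m. c m \<noteq> 0 \<and> m S = al \<and> m (E q) = 0)" by simp
  finally show ?thesis .
qed

lemma valid_nat: "al \<le> W \<Longrightarrow> valid W q al n \<longleftrightarrow> q * (W - al) \<le> n"
proof -
  assume a: "al \<le> W"
  have "int q * (int W - int al) = int (q * (W - al))" using a by simp
  then show ?thesis unfolding valid_def by (simp only: of_nat_le_iff)
qed

lemma nat_int_minus: "nat (int a - int b) = a - b" by simp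

lemma mk_nat: "al \<le> W \<Longrightarrow> j \<le> Q \<Longrightarrow> mk W D Q al n (E j) = n - j * (W - al)"
proof -
  assume a: "al \<le> W" "j \<le> Q"
  have e1: "mk W D Q al n (E j) = nat (int n - int j * (int W - int al))" using a(2) by simp
  have e2: "int j * (int W - int al) = int (j * (W - al))" using a(1) by (simp add: of_nat_diff)
  show ?thesis unfolding e1 e2 nat_int_minus ..
qed

lemma cnd_iff:
  assumes al: "al < W" and WD: "W \<le> D"
  shows "(\<exists>m. blowups W (lift H D) q m \<noteq> 0 \<and> m S = al \<and> m (E q) < W - al) \<longleftrightarrow>
         (\<exists>n. coeff (H al) n \<noteq> 0 \<and> q * (W - al) \<le> n \<and> n < Suc q * (W - al))"
proof
  assume "\<exists>m. blowups W (lift H D) q m \<noteq> 0 \<and> m S = al \<and> m (E q) < W - al"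
  then obtain m where m: "blowups W (lift H D) q m \<noteq> 0" "m S = al" "m (E q) < W - al" by blast
  obtain a n where an: "a \<le> D" "valid W q a n" "m = mk W D q a n" "coeff (H a) n \<noteq> 0"
    using blow_nz[OF m(1)] by blast
  have a: "a = al" using an(3) m(2) by simp
  have v: "q * (W - al) \<le> n" using an(2) valid_nat[of al W q n] al a by simp
  have "n - q * (W - al) < W - al" using m(3) an(3) mk_nat[of al W q q D n] al a by simp
  then have "n < Suc q * (W - al)" using v by simp
  then show "\<exists>n. coeff (H al) n \<noteq> 0 \<and> q * (W - al) \<le> n \<and> n < Suc q * (W - al)"
    using an(4) a v by blast
next
  assume "\<exists>n. coeff (H al) n \<noteq> 0 \<and> q * (W - al) \<le> n \<and> n < Suc q * (W - al)"
  then obtain n where n: "coeff (H al) n \<noteq> 0" "q * (W - al) \<le> n" "n < Suc q * (W - al)" by blast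
  have v: "valid W q al n" using valid_nat[of al W q n] al n(2) by simp
  have aD: "al \<le> D" using al WD by simp
  have "blowups W (lift H D) q (mk W D q al n) \<noteq> 0" using blow_mk_val[OF aD v] n(1) by simp
  moreover have "mk W D q al n (E q) < W - al" using mk_nat[of al W q q D n] al n(2,3) by simp
  ultimately show "\<exists>m. blowups W (lift H D) q m \<noteq> 0 \<and> m S = al \<and> m (E q) < W - al"
    by (intro exI[of _ "mk W D q al n"]) simp
qed

lemma std_iff:
  assumes al: "al < W" and WD: "W \<le> D"
  shows "(\<exists>m. blowups W (lift H D) q m \<noteq> 0 \<and> m S = al \<and> m (E q) = 0) \<longleftrightarrow>
         (\<exists>n. coeff (H al) n \<noteq> 0 \<and> n = q * (W - al))"
proof
  assume "\<exists>m. blowups W (lift H D) q m \<noteq> 0 \<and> m S = al \<and> m (E q) = 0"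
  then obtain m where m: "blowups W (lift H D) q m \<noteq> 0" "m S = al" "m (E q) = 0" by blast
  obtain a n where an: "a \<le> D" "valid W q a n" "m = mk W D q a n" "coeff (H a) n \<noteq> 0"
    using blow_nz[OF m(1)] by blast
  have a: "a = al" using an(3) m(2) by simp
  have v: "q * (W - al) \<le> n" using an(2) valid_nat[of al W q n] al a by simp
  have "n - q * (W - al) = 0" using m(3) an(3) mk_nat[of al W q q D n] al a by simp
  then have "n = q * (W - al)" using v by simp
  then show "\<exists>n. coeff (H al) n \<noteq> 0 \<and> n = q * (W - al)" using an(4) a by blast
next
  assume "\<exists>n. coeff (H al) n \<noteq> 0 \<and> n = q * (W - al)"
  then obtain n where n: "coeff (H al) n \<noteq> 0" "n = q * (W - al)" by blast
  have v: "valid W q al n" using valid_nat[of al W q n] al n(2) by simp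
  have aD: "al \<le> D" using al WD by simp
  have "blowups W (lift H D) q (mk W D q al n) \<noteq> 0" using blow_mk_val[OF aD v] n(1) by simp
  moreover have "mk W D q al n (E q) = 0" using mk_nat[of al W q q D n] al n(2) by simp
  ultimately show "\<exists>m. blowups W (lift H D) q m \<noteq> 0 \<and> m S = al \<and> m (E q) = 0"
    by (intro exI[of _ "mk W D q al n"]) simp
qed

definition CN :: "(nat \<Rightarrow> complex poly) \<Rightarrow> nat \<Rightarrow> nat \<Rightarrow> bool" where
  "CN H W q \<longleftrightarrow> (\<exists>al<W. \<exists>n. coeff (H al) n \<noteq> 0 \<and> q * (W - al) \<le> n \<and> n < Suc q * (W - al))"
definition CNb :: "nat \<Rightarrow> (nat \<Rightarrow> complex poly) \<Rightarrow> nat \<Rightarrow> nat \<Rightarrow> bool" where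
  "CNb k H W q \<longleftrightarrow> (\<exists>al<W. \<exists>n. coeff (H al) n \<noteq> 0 \<and> q * (W - al) \<le> k * n \<and> k * n < Suc q * (W - al))"
definition SN :: "(nat \<Rightarrow> complex poly) \<Rightarrow> nat \<Rightarrow> nat \<Rightarrow> bool" where
  "SN H W P \<longleftrightarrow> (\<exists>al<W. \<exists>n. coeff (H al) n \<noteq> 0 \<and> n = P * (W - al))"

lemma CF_iff:
  assumes WD: "W \<le> D"
  shows "(\<exists>al<W. H al \<noteq> 0 \<and> coeff_eord (blowups W (lift H D) q) q al < enat (W - al)) \<longleftrightarrow> CN H W q"
  unfolding CN_def coeff_eord_lt
proof (intro iffI)
  assume "\<exists>al<W. H al \<noteq> 0 \<and> (\<exists>m. blowups W (lift H D) q m \<noteq> 0 \<and> m S = al \<and> m (E q) < W - al)"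
  then obtain al where al: "al < W" "\<exists>m. blowups W (lift H D) q m \<noteq> 0 \<and> m S = al \<and> m (E q) < W - al" by blast
  then show "\<exists>al<W. \<exists>n. coeff (H al) n \<noteq> 0 \<and> q * (W - al) \<le> n \<and> n < Suc q * (W - al)"
    using cnd_iff[OF al(1) WD] by blast
next
  assume "\<exists>al<W. \<exists>n. coeff (H al) n \<noteq> 0 \<and> q * (W - al) \<le> n \<and> n < Suc q * (W - al)"
  then obtain al n where al: "al < W" "coeff (H al) n \<noteq> 0" "q * (W - al) \<le> n" "n < Suc q * (W - al)" by blast
  have "H al \<noteq> 0" using al(2) by auto
  moreover have "\<exists>m. blowups W (lift H D) q m \<noteq> 0 \<and> m S = al \<and> m (E q) < W - al"
    using cnd_iff[OF al(1) WD] al by blast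
  ultimately show "\<exists>al<W. H al \<noteq> 0 \<and> (\<exists>m. blowups W (lift H D) q m \<noteq> 0 \<and> m S = al \<and> m (E q) < W - al)"
    using al(1) by blast
qed

lemma CN_bc: "0 < k \<Longrightarrow> CN (bc k H) W q \<longleftrightarrow> CNb k H W q"
proof -
  assume k: "0 < k"
  show ?thesis unfolding CN_def CNb_def
  proof (intro iffI)
    assume "\<exists>al<W. \<exists>n. coeff (bc k H al) n \<noteq> 0 \<and> q * (W - al) \<le> n \<and> n < Suc q * (W - al)"
    then obtain al n where h: "al < W" "coeff (bc k H al) n \<noteq> 0" "q * (W - al) \<le> n" "n < Suc q * (W - al)" by blast
    then have d: "k dvd n" "coeff (H al) (n div k) \<noteq> 0" using k by (auto simp: coeff_bc split: if_splits)
    from d(1) obtain n' where n': "n = k * n'" by (elim dvdE)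
    have "n div k = n'" using n' k by simp
    then have "coeff (H al) n' \<noteq> 0" using d(2) by simp
    then show "\<exists>al<W. \<exists>n. coeff (H al) n \<noteq> 0 \<and> q * (W - al) \<le> k * n \<and> k * n < Suc q * (W - al)"
      using h(1,3,4) unfolding n' by blast
  next
    assume "\<exists>al<W. \<exists>n. coeff (H al) n \<noteq> 0 \<and> q * (W - al) \<le> k * n \<and> k * n < Suc q * (W - al)"
    then obtain al n where h: "al < W" "coeff (H al) n \<noteq> 0" "q * (W - al) \<le> k * n" "k * n < Suc q * (W - al)" by blast
    have "coeff (bc k H al) (k * n) \<noteq> 0" using h(2) k by (simp add: coeff_bc)
    then show "\<exists>al<W. \<exists>n. coeff (bc k H al) n \<noteq> 0 \<and> q * (W - al) \<le> n \<and> n < Suc q * (W - al)"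
      using h by blast
  qed
qed

lemma SF_iff:
  assumes WD: "W \<le> D"
  shows "(\<exists>al<W. H al \<noteq> 0 \<and> coeff_eord (blowups W (lift H D) P) P al = 0) \<longleftrightarrow> SN H W P"
  unfolding SN_def coeff_eord_0
proof (intro iffI)
  assume "\<exists>al<W. H al \<noteq> 0 \<and> (\<exists>m. blowups W (lift H D) P m \<noteq> 0 \<and> m S = al \<and> m (E P) = 0)"
  then obtain al where al: "al < W" "\<exists>m. blowups W (lift H D) P m \<noteq> 0 \<and> m S = al \<and> m (E P) = 0" by blast
  then show "\<exists>al<W. \<exists>n. coeff (H al) n \<noteq> 0 \<and> n = P * (W - al)"
    using std_iff[OF al(1) WD] by blast
next
  assume "\<exists>al<W. \<exists>n. coeff (H al) n \<noteq> 0 \<and> n = P * (W - al)"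
  then obtain al n where al: "al < W" "coeff (H al) n \<noteq> 0" "n = P * (W - al)" by blast
  have "H al \<noteq> 0" using al(2) by auto
  moreover have "\<exists>m. blowups W (lift H D) P m \<noteq> 0 \<and> m S = al \<and> m (E P) = 0"
    using std_iff[OF al(1) WD] al by blast
  ultimately show "\<exists>al<W. H al \<noteq> 0 \<and> (\<exists>m. blowups W (lift H D) P m \<noteq> 0 \<and> m S = al \<and> m (E P) = 0)"
    using al(1) by blast
qed

lemma SN_CN: "SN H W P \<Longrightarrow> CN H W P"
proof -
  assume "SN H W P"
  then obtain al n where h: "al < W" "coeff (H al) n \<noteq> 0" "n = P * (W - al)" unfolding SN_def by blast
  have "n < Suc P * (W - al)" using h(1,3) by simp
  then show "CN H W P" unfolding CN_def using h by blast
qed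

lemma SN_CNb: "0 < k \<Longrightarrow> SN H W P \<Longrightarrow> CNb k H W (k * P)"
proof -
  assume k: "0 < k" and "SN H W P"
  then obtain al n where h: "al < W" "coeff (H al) n \<noteq> 0" "n = P * (W - al)" unfolding SN_def by blast
  have e: "k * n = k * P * (W - al)" using h(3) by simp
  have p1: "k * P * (W - al) \<le> k * n" by (simp only: e le_refl)
  have p2: "k * n < Suc (k * P) * (W - al)" unfolding e using h(1) by simp
  have "al < W \<and> coeff (H al) n \<noteq> 0 \<and> (k * P) * (W - al) \<le> k * n \<and> k * n < Suc (k * P) * (W - al)"
    using h(1,2) p1 p2 by blast
  then show "CNb k H W (k * P)" unfolding CNb_def by blast
qed

lemma CNb_small:
  assumes k: "0 < k" and c: "CNb k H W q" and q: "q < k * P"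
  shows "\<exists>q'<P. CN H W q'"
proof -
  obtain al n where h: "al < W" "coeff (H al) n \<noteq> 0" "q * (W - al) \<le> k * n" "k * n < Suc q * (W - al)"
    using c unfolding CNb_def by blast
  define d where "d = W - al"
  have d0: "0 < d" using h(1) unfolding d_def by simp
  have "Suc q * d \<le> (k * P) * d" using q by (intro mult_le_mono1) simp
  then have "k * n < (k * P) * d" using h(4) unfolding d_def by linarith
  then have "k * n < k * (P * d)" by (simp only: mult.assoc)
  then have nP: "n < P * d" using k by simp
  define q' where "q' = n div d"
  have e: "n div d * d + n mod d = n" by (rule div_mult_mod_eq)
  have md: "n mod d < d" using d0 by simp
  have "q' < P" unfolding q'_def using nP by (simp add: less_mult_imp_div_less)
  moreover have "CN H W q'"
    unfolding CN_def
  proof (intro exI conjI)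
    show "al < W" by (rule h(1))
    show "coeff (H al) n \<noteq> 0" by (rule h(2))
    show "q' * (W - al) \<le> n" using e unfolding q'_def d_def by linarith
    show "n < Suc q' * (W - al)" using e md unfolding q'_def d_def by simp
  qed
  ultimately show ?thesis by blast
qed

lemma chain_eq:
  assumes k: "0 < k" and P: "P = (LEAST q. CN F 4 q \<or> CN G 6 q)" and s: "SN F 4 P \<or> SN G 6 P"
  shows "(LEAST q. CNb k F 4 q \<or> CNb k G 6 q) = k * P"
proof (rule Least_equality)
  show "CNb k F 4 (k * P) \<or> CNb k G 6 (k * P)" using s SN_CNb[OF k] by blast
next
  fix q assume c: "CNb k F 4 q \<or> CNb k G 6 q"
  show "k * P \<le> q"
  proof (rule ccontr)
    assume "\<not> k * P \<le> q"
    then have q: "q < k * P" by simp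
    from c obtain q' where q': "q' < P" "CN F 4 q' \<or> CN G 6 q'"
      using CNb_small[OF k _ q] by blast
    have "\<not> (CN F 4 q' \<or> CN G 6 q')" using q'(1) unfolding P by (rule not_less_Least)
    then show False using q'(2) by blast
  qed
qed

lemma chainP_eq: "chainP F G = (LEAST q. CN F 4 q \<or> CN G 6 q)"
proof -
  have a: "\<And>q. (\<exists>al<4. F al \<noteq> 0 \<and> coeff_eord (blowups 4 (lift F 8) q) q al < enat (4 - al)) \<longleftrightarrow> CN F 4 q"
    by (rule CF_iff) simp
  have b: "\<And>q. (\<exists>al<6. G al \<noteq> 0 \<and> coeff_eord (blowups 6 (lift G 12) q) q al < enat (6 - al)) \<longleftrightarrow> CN G 6 q"
    by (rule CF_iff) simp
  show ?thesis unfolding chainP_def fB_def gB_def a b ..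
qed

lemma chainP_bar: "0 < k \<Longrightarrow> chainP (bc k F) (bc k G) = (LEAST q. CNb k F 4 q \<or> CNb k G 6 q)"
  unfolding chainP_eq CN_bc by simp

lemma standing_SN: "standing F G \<Longrightarrow> SN F 4 (chainP F G) \<or> SN G 6 (chainP F G)"
proof -
  assume s: "standing F G"
  have a: "\<And>q. (\<exists>al<4. F al \<noteq> 0 \<and> coeff_eord (blowups 4 (lift F 8) q) q al = 0) \<longleftrightarrow> SN F 4 q"
    by (rule SF_iff) simp
  have b: "\<And>q. (\<exists>al<6. G al \<noteq> 0 \<and> coeff_eord (blowups 6 (lift G 12) q) q al = 0) \<longleftrightarrow> SN G 6 q"
    by (rule SF_iff) simp
  show ?thesis using s unfolding standing_def Let_def fB_def gB_def a b .
qed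

lemma pcompose_numeral: "pcompose (numeral n) r = numeral n"
  by (metis numeral_poly pcompose_const)

lemma disc_bc: "disc (bc k F) (bc k G) = bc k (disc F G)"
  unfolding disc_def bf_mult_def bc_def
  by (simp add: pcompose_add pcompose_mult pcompose_sum pcompose_numeral)

lemma Dprime_eq: "Dprime F G = (\<lambda>m. DB F G (chainP F G) (addsh (eord (DB F G (chainP F G))) m))"
  unfolding Dprime_def Let_def addsh_def ..

lemma nonsp_unpack:
  assumes ns: "\<not> special_fiber F G p"
  shows "\<exists>x\<in>VV 12 24 (chainP F G) (disc F G).
    mk 12 24 (chainP F G) (fst x) (snd x) (E p) = eord (blowups 12 (lift (disc F G) 24) (chainP F G)) p \<and>
    mk 12 24 (chainP F G) (fst x) (snd x) (E (Suc p)) = eord (blowups 12 (lift (disc F G) 24) (chainP F G)) (Suc p)"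
proof -
  let ?c = "blowups 12 (lift (disc F G) 24) (chainP F G)"
  obtain m where m: "Dprime F G m \<noteq> 0" "m (E p) = 0" "m (E (Suc p)) = 0"
    using ns unfolding special_fiber_def by blast
  have c: "?c (addsh (eord ?c) m) \<noteq> 0" using m(1) unfolding Dprime_eq DB_def by simp
  obtain x where x: "x \<in> VV 12 24 (chainP F G) (disc F G)"
      "addsh (eord ?c) m = mk 12 24 (chainP F G) (fst x) (snd x)"
    using blow_nz_VV[OF c] by blast
  have "mk 12 24 (chainP F G) (fst x) (snd x) (E p) = eord ?c p"
    using x(2)[symmetric] m(2) by simp
  moreover have "mk 12 24 (chainP F G) (fst x) (snd x) (E (Suc p)) = eord ?c (Suc p)"
    using x(2)[symmetric] m(3) by simp
  ultimately show ?thesis using x(1) by blast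
qed

theorem proposition8:
  fixes F G :: "nat \<Rightarrow> complex poly" and k :: nat
  assumes degF: "\<forall>i>8. F i = 0"
    and degG: "\<forall>j>12. G j = 0"
    and ab: "\<not> (4 \<le> s_ord F \<and> 6 \<le> s_ord G)"
    and classes: "\<forall>l>0. threefold_cond (bc l F) (bc l G)"
    and stand: "standing F G"
    and nospecial: "\<forall>p<chainP F G. \<not> special_fiber F G p"
    and kpos: "0 < k"
  shows "\<forall>p\<le>chainP F G. \<forall>x y. (x, y) \<noteq> (0, 0) \<longrightarrow>
           K3_orders F G p x y = K3_orders (bc k F) (bc k G) (k * p) x y"
proof (intro allI impI)
  fix p x y assume pP: "p \<le> chainP F G"
  define P where "P = chainP F G"
  have pP': "p \<le> P" using pP unfolding P_def .
  have Pb: "chainP (bc k F) (bc k G) = k * P"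
    unfolding chainP_bar[OF kpos] P_def
    by (rule chain_eq[OF kpos chainP_eq]) (use standing_SN[OF stand] in simp)
  have f: "k3ord (fB (bc k F) (k * P)) (k * P) (k * p) x y = k3ord (fB F P) P p x y"
    unfolding fB_def by (rule k3_cmp0[OF kpos pP'])
  have g: "k3ord (gB (bc k G) (k * P)) (k * P) (k * p) x y = k3ord (gB G P) P p x y"
    unfolding gB_def by (rule k3_cmp0[OF kpos pP'])
  have nonsp: "\<forall>p'<P. \<exists>x\<in>VV 12 24 P (disc F G).
      mk 12 24 P (fst x) (snd x) (E p') = eord (blowups 12 (lift (disc F G) 24) P) p' \<and>
      mk 12 24 P (fst x) (snd x) (E (Suc p')) = eord (blowups 12 (lift (disc F G) 24) P) (Suc p')"
    using nonsp_unpack nospecial unfolding P_def by blast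
  have D1: "Dprime F G = (\<lambda>m. blowups 12 (lift (disc F G) 24) P (addsh (eord (blowups 12 (lift (disc F G) 24) P)) m))"
    unfolding Dprime_eq DB_def P_def ..
  have D2: "Dprime (bc k F) (bc k G) = (\<lambda>m. blowups 12 (lift (bc k (disc F G)) 24) (k * P)
      (addsh (eord (blowups 12 (lift (bc k (disc F G)) 24) (k * P))) m))"
    unfolding Dprime_eq DB_def Pb disc_bc ..
  have d: "k3ord (Dprime (bc k F) (bc k G)) (k * P) (k * p) x y = k3ord (Dprime F G) P p x y"
    unfolding D1 D2 by (rule k3_D[OF kpos pP' nonsp])
  show "K3_orders F G p x y = K3_orders (bc k F) (bc k G) (k * p) x y"
    unfolding K3_orders_def Let_def Pb P_def[symmetric] using f g d by simp
qed

end
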